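(* Let $\mathcal S$ be a finite subset of the unit sphere $\mathbb S^{n-1}\subset\mathbb R^n$ such that $\mathrm{Span}_{\mathbb R}\mathcal S=\mathbb R^n$ and $-v\in\mathcal S$ whenever $v\in\mathcal S$. Then there exist a basis $\mathcal B$ of $\mathbb R^n$ contained in $\mathcal S$ and linear maps $F:\mathbb R^n\to\mathbb R^n$ arbitrarily close to the identity such that for all $v\in\mathcal S$: $|Fv|=|v|$ if $v\in\mathcal B$ or $-v\in\mathcal B$, and $|Fv|>|v|$ otherwise.
   Context: $|\cdot|$ is the euclidean norm on $\mathbb R^n$. *)

theory Defs
  imports "HOL-Analysis.Analysis"
begin

end

theory Submission imports Defs begin

definition good :: "'a::euclidean_space set \<Rightarrow> 'a set \<Rightarrow> bool" where
  "good S B \<longleftrightarrow> (\<forall>e>0. \<exists>F. linear F \<and> (\<forall>x. norm (F x - x) \<le> e * norm x) \<and>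
     (\<forall>v\<in>S \<inter> span B. ((v \<in> B \<or> - v \<in> B) \<longrightarrow> norm (F v) = norm v) \<and>
        (\<not> (v \<in> B \<or> - v \<in> B) \<longrightarrow> norm (F v) > norm v)))"

lemma tendsto_from_bound:
  fixes X :: "nat \<Rightarrow> 'a::real_normed_vector"
  assumes "\<And>m. norm (X m - a) \<le> c / real (Suc m)"
  shows "X \<longlonglongrightarrow> a"
proof -
  have "(\<lambda>m. c * inverse (real (Suc m))) \<longlonglongrightarrow> 0"
    using tendsto_mult_right_zero[OF LIMSEQ_inverse_real_of_nat] by simp
  then have "(\<lambda>m. c / real (Suc m)) \<longlonglongrightarrow> 0" by (simp add: divide_inverse)
  moreover have "eventually (\<lambda>m. norm (X m - a) \<le> c / real (Suc m)) sequentially"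
    using assms by (simp add: always_eventually)
  ultimately have "(\<lambda>m. X m - a) \<longlonglongrightarrow> 0"
    using Lim_null_comparison[of "\<lambda>m. X m - a" "\<lambda>m. c / real (Suc m)" sequentially] by blast
  then show ?thesis by (simp add: LIM_zero_iff)
qed

lemma key_ineq:
  fixes x p h b v :: "'a::euclidean_space"
  assumes vb: "v = x + s *\<^sub>R b" and bdec: "b = p + h"
    and nv: "norm v = 1" and nb: "norm b = 1"
    and xh: "x \<bullet> h = 0" and ph: "p \<bullet> h = 0"
    and hnz: "h \<noteq> 0"
    and s1: "1 \<le> \<bar>s\<bar>" and xnz: "x \<noteq> 0"
    and t: "0 < t" "t < 1"
  shows "1 < norm (x + (s / norm (t *\<^sub>R p + h)) *\<^sub>R (t *\<^sub>R p + h))"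
proof -
  define q where "q = t *\<^sub>R p + h"
  define N where "N = norm q"
  have hh: "h \<bullet> h > 0" using hnz by simp
  have bb: "b \<bullet> b = 1" using nb by (metis power2_norm_eq_inner power_one)
  have pphh: "p \<bullet> p + h \<bullet> h = 1" using bb bdec ph
    by (simp add: inner_add_left inner_add_right inner_commute[of h p])
  have qq: "q \<bullet> q = t^2 * (p \<bullet> p) + h \<bullet> h" unfolding q_def using ph
    by (simp add: inner_add_left inner_add_right inner_commute[of h p] power2_eq_square)
  have tt: "t * t < 1" using t mult_strict_mono[of t 1 t 1] by simp
  have t2: "t^2 < 1" using tt by (simp add: power2_eq_square)
  have "t^2 * (h \<bullet> h) < 1 * (h \<bullet> h)" by (rule mult_strict_right_mono[OF t2 hh])
  moreover have pp: "p \<bullet> p = 1 - h \<bullet> h" using pphh by simp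
  moreover have "q \<bullet> q = t^2 - t^2 * (h \<bullet> h) + h \<bullet> h" using qq pp by (simp add: algebra_simps)
  ultimately have "t^2 < q \<bullet> q" by simp
  then have "t^2 < N^2" unfolding N_def by (simp add: power2_norm_eq_inner)
  then have tN: "t < N" by (rule power2_less_imp_less) (simp add: N_def)
  have Npos: "N > 0" using tN t by simp
  have tN1: "t / N < 1" using tN Npos by simp
  have xq: "x \<bullet> q = t * (x \<bullet> p)" unfolding q_def using xh by (simp add: inner_add_right)
  have xb: "x \<bullet> b = x \<bullet> p" using bdec xh by (simp add: inner_add_right)
  have "v \<bullet> v = 1" using nv by (metis power2_norm_eq_inner power_one)
  moreover have "v \<bullet> v = x \<bullet> x + 2 * (s * (x \<bullet> b)) + s^2 * (b \<bullet> b)"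
    unfolding vb by (simp add: inner_add_left inner_add_right inner_commute[of b x] power2_eq_square algebra_simps)
  ultimately have vv: "x \<bullet> x + 2 * (s * (x \<bullet> p)) + s^2 = 1" using bb xb by simp
  have ss: "s^2 \<ge> 1" using s1 by (metis abs_ge_self abs_one one_le_power abs_le_square_iff power_one)
  have xx: "x \<bullet> x > 0" using xnz by simp
  have aneg: "s * (x \<bullet> p) < 0" using vv ss xx by linarith
  define L where "L = x + (s / N) *\<^sub>R q"
  have "L \<bullet> L = x \<bullet> x + 2 * (s / N) * (x \<bullet> q) + (s/N)^2 * (q \<bullet> q)"
    unfolding L_def by (simp add: inner_add_left inner_add_right inner_commute[of q x] power2_eq_square algebra_simps)
  also have "q \<bullet> q = N^2" unfolding N_def by (simp add: power2_norm_eq_inner)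
  finally have LL: "L \<bullet> L = x \<bullet> x + 2 * ((s * (x \<bullet> p)) * (t / N)) + s^2"
    using Npos xq by (simp add: power2_eq_square field_simps)
  have "(s * (x \<bullet> p)) * 1 < (s * (x \<bullet> p)) * (t / N)"
    by (rule mult_strict_left_mono_neg[OF tN1 aneg])
  then have "1 < L \<bullet> L" using LL vv by linarith
  then have "1 < (norm L)^2" by (simp add: power2_norm_eq_inner)
  then have "1 < norm L" by (smt (verit) norm_ge_zero power_le_one)
  then show ?thesis unfolding L_def N_def q_def .
qed


lemma step:
  fixes S B :: "'a::euclidean_space set" and b p h :: 'a
  assumes fin: "finite S" and sph: "S \<subseteq> sphere 0 1" and good: "good S B"
    and bS: "b \<in> S" and bnot: "b \<notin> span B"
    and pB: "p \<in> span B" and horth: "\<And>w. w \<in> span B \<Longrightarrow> h \<bullet> w = 0" and bdec: "b = p + h"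
    and minimal: "\<And>v y z. v \<in> S \<Longrightarrow> v \<notin> span B \<Longrightarrow> y \<in> span B \<Longrightarrow>
        (\<And>w. w \<in> span B \<Longrightarrow> z \<bullet> w = 0) \<Longrightarrow> v = y + z \<Longrightarrow> norm h \<le> norm z"
  shows "good S (insert b B)"
  unfolding good_def
proof (intro allI impI)
  fix e2 :: real assume e2: "e2 > 0"
  have hnz: "h \<noteq> 0" using bnot bdec pB by auto
  have hh: "h \<bullet> h > 0" using hnz by simp
  have ph: "p \<bullet> h = 0" using horth[OF pB] by (simp add: inner_commute[of h p])
  have nS: "\<And>v. v \<in> S \<Longrightarrow> norm v = 1" using sph by auto
  have nb: "norm b = 1" using nS bS by auto
  have bh: "b \<bullet> h = h \<bullet> h" using bdec ph by (simp add: inner_add_left)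
  define Q where "Q t = t *\<^sub>R p + h" for t :: real
  have Qh: "Q t \<bullet> h = h \<bullet> h" for t unfolding Q_def using ph by (simp add: inner_add_left)
  have Qnz: "Q t \<noteq> 0" for t using Qh[of t] hh by (metis inner_zero_left less_irrefl)
  have nQ: "norm (Q t) \<noteq> 0" for t using Qnz by simp
  have Q1: "Q 1 = b" unfolding Q_def bdec by simp
  have "((\<lambda>t. norm ((1 / norm (Q t)) *\<^sub>R Q t - b) / norm h) \<longlongrightarrow>
          norm ((1 / norm (Q 1)) *\<^sub>R Q 1 - b) / norm h) (at_left 1)"
    unfolding Q_def using nQ[of 1] unfolding Q_def
    using hnz by (intro tendsto_intros) auto
  then have "((\<lambda>t. norm ((1 / norm (Q t)) *\<^sub>R Q t - b) / norm h) \<longlongrightarrow> 0) (at_left 1)"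
    using Q1 nb by simp
  then have "eventually (\<lambda>t. norm ((1 / norm (Q t)) *\<^sub>R Q t - b) / norm h < e2) (at_left 1)"
    using e2 by (rule order_tendstoD(2))
  moreover have "eventually (\<lambda>t. t \<in> {0<..<1}) (at_left (1::real))"
    by (rule eventually_at_left_real) simp
  ultimately have "eventually (\<lambda>t. norm ((1 / norm (Q t)) *\<^sub>R Q t - b) / norm h < e2 \<and> t \<in> {0<..<1}) (at_left (1::real))"
    by (rule eventually_conj)
  then obtain t where t: "0 < t" "t < 1" and Kt: "norm ((1 / norm (Q t)) *\<^sub>R Q t - b) / norm h < e2"
    using eventually_happens[of _ "at_left (1::real)"] by auto
  define q where "q = Q t"
  have qnz: "q \<noteq> 0" and nq: "norm q > 0" using Qnz q_def by auto
  have "\<forall>m. \<exists>Fm. linear Fm \<and> (\<forall>x. norm (Fm x - x) \<le> (1 / real (Suc m)) * norm x) \<and>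
     (\<forall>v\<in>S \<inter> span B. ((v \<in> B \<or> - v \<in> B) \<longrightarrow> norm (Fm v) = norm v) \<and>
        (\<not> (v \<in> B \<or> - v \<in> B) \<longrightarrow> norm (Fm v) > norm v))"
  proof
    fix m :: nat
    have pos: "(0::real) < 1 / real (Suc m)" by simp
    show "\<exists>Fm. linear Fm \<and> (\<forall>x. norm (Fm x - x) \<le> (1 / real (Suc m)) * norm x) \<and>
     (\<forall>v\<in>S \<inter> span B. ((v \<in> B \<or> - v \<in> B) \<longrightarrow> norm (Fm v) = norm v) \<and>
        (\<not> (v \<in> B \<or> - v \<in> B) \<longrightarrow> norm (Fm v) > norm v))"
      using good[unfolded good_def, rule_format, OF pos] .
  qed
  from choice[OF this] obtain F where F: "\<forall>m. linear (F m) \<and> (\<forall>x. norm (F m x - x) \<le> (1 / real (Suc m)) * norm x) \<and>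
     (\<forall>v\<in>S \<inter> span B. ((v \<in> B \<or> - v \<in> B) \<longrightarrow> norm (F m v) = norm v) \<and>
        (\<not> (v \<in> B \<or> - v \<in> B) \<longrightarrow> norm (F m v) > norm v))" by blast
  have Fm: "linear (F m) \<and> (\<forall>x. norm (F m x - x) \<le> (1 / real (Suc m)) * norm x) \<and>
     (\<forall>v\<in>S \<inter> span B. ((v \<in> B \<or> - v \<in> B) \<longrightarrow> norm (F m v) = norm v) \<and>
        (\<not> (v \<in> B \<or> - v \<in> B) \<longrightarrow> norm (F m v) > norm v))" for m
    using F by (rule spec)
  have FL: "linear (F m)" for m using Fm[of m] by (rule conjunct1)
  have FP: "((v \<in> B \<or> - v \<in> B) \<longrightarrow> norm (F m v) = norm v) \<and>
        (\<not> (v \<in> B \<or> - v \<in> B) \<longrightarrow> norm (F m v) > norm v)" if "v \<in> S \<inter> span B" for m v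
    using Fm[of m, THEN conjunct2, THEN conjunct2] that by (rule bspec)
  have Fb: "norm (F m x - x) \<le> norm x / real (Suc m)" for m x
  proof -
    have "norm (F m x - x) \<le> (1 / real (Suc m)) * norm x"
      using Fm[of m, THEN conjunct2, THEN conjunct1] by (rule spec)
    then show ?thesis by simp
  qed
  have Fconv: "(\<lambda>m. F m u) \<longlonglongrightarrow> u" for u by (rule tendsto_from_bound) (rule Fb)
  define lam where "lam m = 1 / norm (F m q)" for m
  define R where "R m u = u + ((u \<bullet> h) / (h \<bullet> h)) *\<^sub>R (lam m *\<^sub>R q - b)" for m u
  define G where "G m = F m \<circ> R m" for m
  have RL: "linear (R m)" for m
    unfolding R_def by (rule linearI) (simp_all add: inner_add_left add_divide_distrib scaleR_add_left algebra_simps)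
  have GL: "linear (G m)" for m unfolding G_def by (rule linear_compose[OF RL FL])
  have RB: "x \<in> span B \<Longrightarrow> R m x = x" for m x
    unfolding R_def using horth[of x] by (simp add: inner_commute[of h x])
  have Rb: "R m b = lam m *\<^sub>R q" for m unfolding R_def using bh hh by simp
  have lamc: "lam \<longlonglongrightarrow> 1 / norm q" unfolding lam_def
    using nq by (intro tendsto_intros Fconv) auto
  define K where "K m = norm (lam m *\<^sub>R q - b) / norm h" for m
  define c where "c m = (1 / real (Suc m)) * (1 + K m) + K m" for m
  have "c \<longlonglongrightarrow> 0 * (1 + norm ((1 / norm q) *\<^sub>R q - b) / norm h) + norm ((1 / norm q) *\<^sub>R q - b) / norm h"
  proof -
    have inv0: "(\<lambda>m. 1 / real (Suc m)) \<longlonglongrightarrow> 0"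
      using LIMSEQ_inverse_real_of_nat by (simp add: inverse_eq_divide)
    have Kc: "K \<longlonglongrightarrow> norm ((1 / norm q) *\<^sub>R q - b) / norm h"
      unfolding K_def using hnz by (intro tendsto_intros lamc) auto
    show ?thesis unfolding c_def by (intro tendsto_add tendsto_mult inv0 Kc tendsto_const)
  qed
  then have "c \<longlonglongrightarrow> norm ((1 / norm q) *\<^sub>R q - b) / norm h" by simp
  then have ev1: "eventually (\<lambda>m. c m < e2) sequentially"
    using Kt unfolding q_def by (rule order_tendstoD(2))
  have "(\<lambda>m. norm (F m q)) \<longlonglongrightarrow> norm q" by (intro tendsto_intros Fconv)
  then have ev2: "eventually (\<lambda>m. 0 < norm (F m q)) sequentially"
    using nq by (rule order_tendstoD(1))
  have close: "norm (G m u - u) \<le> c m * norm u" for m u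
  proof -
    have nh: "norm h * norm h = h \<bullet> h" by (simp add: power2_norm_eq_inner[symmetric] power2_eq_square)
    have "norm (R m u - u) = \<bar>u \<bullet> h\<bar> / (h \<bullet> h) * norm (lam m *\<^sub>R q - b)"
      unfolding R_def using hh by simp
    also have "\<dots> \<le> norm u * norm h / (h \<bullet> h) * norm (lam m *\<^sub>R q - b)"
      using hh by (intro mult_right_mono divide_right_mono Cauchy_Schwarz_ineq2) auto
    also have "\<dots> = norm u * K m" unfolding K_def using nh hnz by (simp add: field_simps)
    finally have r1: "norm (R m u - u) \<le> norm u * K m" .
    have r2: "norm (R m u) \<le> norm u + norm u * K m"
      using r1 norm_triangle_ineq[of u "R m u - u"] by simp
    have "norm (G m u - u) \<le> norm (F m (R m u) - R m u) + norm (R m u - u)"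
      unfolding G_def using norm_triangle_ineq[of "F m (R m u) - R m u" "R m u - u"] by simp
    also have "\<dots> \<le> norm (R m u) / real (Suc m) + norm u * K m"
      using Fb[of m "R m u"] r1 by simp
    also have "\<dots> \<le> (norm u + norm u * K m) / real (Suc m) + norm u * K m"
      using r2 by (simp add: divide_right_mono)
    also have "\<dots> = c m * norm u" unfolding c_def by (simp add: field_simps)
    finally show ?thesis .
  qed
  have ev3: "eventually (\<lambda>m. \<forall>v\<in>S. v \<in> span (insert b B) \<longrightarrow> v \<notin> span B \<longrightarrow> v \<noteq> b \<longrightarrow> v \<noteq> - b \<longrightarrow>
      norm (G m v) > norm v) sequentially"
  proof (rule eventually_ball_finite[OF fin], intro ballI)
    fix v assume vS: "v \<in> S"
    show "eventually (\<lambda>m. v \<in> span (insert b B) \<longrightarrow> v \<notin> span B \<longrightarrow> v \<noteq> b \<longrightarrow> v \<noteq> - b \<longrightarrow>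
      norm (G m v) > norm v) sequentially"
    proof (cases "v \<in> span (insert b B) \<and> v \<notin> span B \<and> v \<noteq> b \<and> v \<noteq> - b")
      case False then show ?thesis by auto
    next
      case True
      then obtain s where xs: "v - s *\<^sub>R b \<in> span B" using span_breakdown_eq by blast
      define x where "x = v - s *\<^sub>R b"
      have xB: "x \<in> span B" using xs x_def by simp
      have vx: "v = x + s *\<^sub>R b" using x_def by simp
      have xh: "x \<bullet> h = 0" using horth[OF xB] by (simp add: inner_commute[of h x])
      have nv: "norm v = 1" using nS vS by auto
      have "norm h \<le> norm (s *\<^sub>R h)"
      proof (rule minimal[OF vS _ _ _ ])
        show "v \<notin> span B" using True by auto
        show "x + s *\<^sub>R p \<in> span B" using xB pB by (simp add: span_add span_scale)
        show "\<And>w. w \<in> span B \<Longrightarrow> s *\<^sub>R h \<bullet> w = 0" using horth by simp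
        show "v = x + s *\<^sub>R p + s *\<^sub>R h" using vx bdec by (simp add: scaleR_add_right)
      qed
      then have s1: "1 \<le> \<bar>s\<bar>" using hnz by simp
      have xnz: "x \<noteq> 0"
      proof
        assume "x = 0"
        then have "v = s *\<^sub>R b" using vx by simp
        then have "\<bar>s\<bar> = 1" using nv nb by simp
        then have "v = b \<or> v = - b" using \<open>v = s *\<^sub>R b\<close> by (cases "s \<ge> 0") auto
        then show False using True by auto
      qed
      have lim: "(\<lambda>m. G m v) \<longlonglongrightarrow> x + (s / norm q) *\<^sub>R q"
      proof -
        have "G m v = F m x + (s * lam m) *\<^sub>R F m q" for m
          unfolding G_def using vx RB[OF xB] Rb linear_add[OF RL] linear_scale[OF RL]
            linear_add[OF FL] linear_scale[OF FL] by simp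
        moreover have "(\<lambda>m. F m x + (s * lam m) *\<^sub>R F m q) \<longlonglongrightarrow> x + (s * (1 / norm q)) *\<^sub>R q"
          by (intro tendsto_intros Fconv lamc)
        ultimately show ?thesis by simp
      qed
      have "1 < norm (x + (s / norm q) *\<^sub>R q)"
        unfolding q_def Q_def
        by (rule key_ineq[OF vx bdec nv nb xh ph hnz s1 xnz t])
      then have "eventually (\<lambda>m. norm v < norm (G m v)) sequentially"
        using nv by (intro order_tendstoD(1)[OF tendsto_norm[OF lim]]) simp
      then show ?thesis by (rule eventually_mono) simp
    qed
  qed
  from eventually_conj[OF ev1 eventually_conj[OF ev2 ev3]]
  obtain N where NN: "\<forall>n\<ge>N. c n < e2 \<and> 0 < norm (F n q) \<and> (\<forall>v\<in>S. v \<in> span (insert b B) \<longrightarrow> v \<notin> span B \<longrightarrow> v \<noteq> b \<longrightarrow> v \<noteq> - b \<longrightarrow>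
      norm (G n v) > norm v)"
    unfolding eventually_sequentially by blast
  define m where "m = N"
  have m1: "c m < e2" and m2: "0 < norm (F m q)" and m3: "\<forall>v\<in>S. v \<in> span (insert b B) \<longrightarrow> v \<notin> span B \<longrightarrow> v \<noteq> b \<longrightarrow> v \<noteq> - b \<longrightarrow>
      norm (G m v) > norm v"
    using NN unfolding m_def by auto
  show "\<exists>F. linear F \<and> (\<forall>x. norm (F x - x) \<le> e2 * norm x) \<and>
     (\<forall>v\<in>S \<inter> span (insert b B). ((v \<in> insert b B \<or> - v \<in> insert b B) \<longrightarrow> norm (F v) = norm v) \<and>
        (\<not> (v \<in> insert b B \<or> - v \<in> insert b B) \<longrightarrow> norm (F v) > norm v))"
  proof (intro exI[of _ "G m"] conjI allI)
    show "linear (G m)" by (rule GL)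
    fix u show "norm (G m u - u) \<le> e2 * norm u"
      using close[of m u] m1 by (meson mult_right_mono norm_ge_zero order.strict_implies_order order_trans)
  next
    show "\<forall>v\<in>S \<inter> span (insert b B). ((v \<in> insert b B \<or> - v \<in> insert b B) \<longrightarrow> norm (G m v) = norm v) \<and>
        (\<not> (v \<in> insert b B \<or> - v \<in> insert b B) \<longrightarrow> norm (G m v) > norm v)"
    proof (rule ballI)
    fix v assume v: "v \<in> S \<inter> span (insert b B)"
    have nv: "norm v = 1" using nS v by auto
    have Gb: "norm (G m b) = 1" unfolding G_def using Rb linear_scale[OF FL] m2 lam_def by simp
    show "((v \<in> insert b B \<or> - v \<in> insert b B) \<longrightarrow> norm (G m v) = norm v) \<and>
        (\<not> (v \<in> insert b B \<or> - v \<in> insert b B) \<longrightarrow> norm (G m v) > norm v)"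
    proof (cases "v \<in> span B")
      case vB: True
      have "G m v = F m v" unfolding G_def using RB[OF vB] by simp
      moreover have "v \<noteq> b" using vB bnot by auto
      moreover have "- v \<noteq> b" using span_neg[OF vB] bnot by auto
      moreover have "v \<in> S \<inter> span B" using v vB by blast
      ultimately show ?thesis using FP[of v m] by simp
    next
      case vB: False
      have nB1: "v \<notin> B" using vB span_base by auto
      have nB2: "- v \<notin> B" using vB span_base span_neg[of "- v" B] by force
      note nB = nB1 nB2
      show ?thesis
      proof (cases "v = b \<or> v = - b")
        case True
        then have "norm (G m v) = 1" using Gb linear_neg[OF GL] by auto
        then show ?thesis using nv True by auto
      next
        case False
        then have "norm (G m v) > norm v" using m3 v vB by auto
        then show ?thesis using False nB by auto
      qed
    qed
    qed
  qed
qed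


lemma good_empty:
  assumes "S \<subseteq> sphere 0 1"
  shows "good S {}"
  unfolding good_def
proof (intro allI impI)
  fix e :: real assume "e > 0"
  have "0 \<notin> S" using assms by auto
  then show "\<exists>F. linear F \<and> (\<forall>x. norm (F x - x) \<le> e * norm x) \<and>
     (\<forall>v\<in>S \<inter> span {}. ((v \<in> {} \<or> - v \<in> {}) \<longrightarrow> norm (F v) = norm v) \<and>
        (\<not> (v \<in> {} \<or> - v \<in> {}) \<longrightarrow> norm (F v) > norm v))"
    using \<open>e > 0\<close> by (intro exI[of _ "\<lambda>x. x"]) (auto simp: linear_id[unfolded id_def])
qed

lemma exists_good:
  fixes S :: "'a::euclidean_space set"
  assumes fin: "finite S" and sph: "S \<subseteq> sphere 0 1" and spS: "span S = UNIV"
  shows "\<exists>B. B \<subseteq> S \<and> independent B \<and> span B = UNIV \<and> good S B"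
proof -
  have "k \<le> DIM('a) \<Longrightarrow> \<exists>B. B \<subseteq> S \<and> independent B \<and> card B = k \<and> good S B" for k
  proof (induction k)
    case 0
    show ?case using good_empty[OF sph] by (intro exI[of _ "{}"]) (auto simp: independent_empty)
  next
    case (Suc k)
    then obtain B where B: "B \<subseteq> S" "independent B" "card B = k" "good S B" by auto
    have finB: "finite B" using B(2) by (simp add: independent_imp_finite)
    have "span B \<noteq> UNIV"
    proof
      assume "span B = UNIV"
      then have "dim (UNIV :: 'a set) = card B" using dim_span_eq_card_independent[OF B(2)] by simp
      then show False using Suc.prems B(3) by simp
    qed
    then have "\<not> S \<subseteq> span B" using spS by (metis span_minimal subspace_span top.extremum_unique)
    then have Tne: "S - span B \<noteq> {}" by blast
    have "\<forall>x. \<exists>y z. y \<in> span B \<and> (\<forall>w\<in>span B. z \<bullet> w = 0) \<and> x = y + z"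
    proof
      fix x
      obtain y z where "y \<in> span B" "\<And>w. w \<in> span B \<Longrightarrow> orthogonal z w" "x = y + z"
        using orthogonal_subspace_decomp_exists[of B x] by blast
      then show "\<exists>y z. y \<in> span B \<and> (\<forall>w\<in>span B. z \<bullet> w = 0) \<and> x = y + z"
        by (auto simp: orthogonal_def)
    qed
    then obtain py pz where dec: "\<And>x. py x \<in> span B" "\<And>x w. w \<in> span B \<Longrightarrow> pz x \<bullet> w = 0"
      "\<And>x. x = py x + pz x" by metis
    define T where "T = S - span B"
    have finT: "finite T" using fin T_def by simp
    define mn where "mn = Min ((\<lambda>v. norm (pz v)) ` T)"
    have "mn \<in> (\<lambda>v. norm (pz v)) ` T" unfolding mn_def using finT Tne T_def by (intro Min_in) auto
    then obtain b where bT: "b \<in> T" and bmn: "norm (pz b) = mn" by auto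
    have bmin: "\<And>v. v \<in> T \<Longrightarrow> mn \<le> norm (pz v)" unfolding mn_def using finT by simp
    have uniq: "z = pz v" if "y \<in> span B" "\<And>w. w \<in> span B \<Longrightarrow> z \<bullet> w = 0" "v = y + z" for v y z
    proof -
      have d: "z - pz v = py v - y" using that(3) dec(3)[of v] by (simp add: algebra_simps)
      have "py v - y \<in> span B" using dec(1) that(1) by (simp add: span_diff)
      then have "(z - pz v) \<bullet> (z - pz v) = 0"
        unfolding d[symmetric] using that(2) dec(2)[of "z - pz v" v] by (simp add: inner_diff_left)
      then show ?thesis by simp
    qed
    have bS: "b \<in> S" and bnot: "b \<notin> span B" using bT T_def by auto
    have gi: "good S (insert b B)"
    proof (rule step[OF fin sph B(4) bS bnot dec(1)[of b] dec(2)[of _ b] dec(3)[of b]])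
      fix v y z assume "v \<in> S" "v \<notin> span B" "y \<in> span B" "\<And>w. w \<in> span B \<Longrightarrow> z \<bullet> w = 0" "v = y + z"
      then have "z = pz v" by (intro uniq) auto
      moreover have "v \<in> T" using \<open>v \<in> S\<close> \<open>v \<notin> span B\<close> T_def by auto
      ultimately show "norm (pz b) \<le> norm z" using bmin bmn by auto
    qed
    have "b \<notin> B" using bnot span_base by auto
    then show ?case using B gi bS bnot finB
      by (intro exI[of _ "insert b B"]) (auto simp: independent_insertI)
  qed
  from this[OF order_refl] obtain B where B: "B \<subseteq> S" "independent B" "card B = DIM('a)" "good S B" by auto
  have "UNIV \<subseteq> span B" by (rule card_ge_dim_independent) (use B in auto)
  then show ?thesis using B by auto
qed

theorem mainTheorem6:
  fixes S :: "(real ^ 'n) set"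
  assumes "finite S"
    and "S \<subseteq> sphere 0 1"
    and "span S = UNIV"
    and "\<And>v. v \<in> S \<Longrightarrow> - v \<in> S"
  shows "\<exists>B. B \<subseteq> S \<and> independent B \<and> span B = UNIV \<and>
    (\<forall>e>0. \<exists>F :: real ^ 'n \<Rightarrow> real ^ 'n. linear F \<and> onorm (\<lambda>x. F x - x) < e \<and>
       (\<forall>v\<in>S. ((v \<in> B \<or> - v \<in> B) \<longrightarrow> norm (F v) = norm v) \<and>
               (\<not> (v \<in> B \<or> - v \<in> B) \<longrightarrow> norm (F v) > norm v)))"
proof -
  obtain B where B: "B \<subseteq> S" "independent B" "span B = UNIV" "good S B"
    using exists_good[OF assms(1-3)] by blast
  show ?thesis
  proof (intro exI[of _ B] conjI B(1-3) allI impI)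
    fix e :: real assume e: "e > 0"
    then have "e / 2 > 0" by simp
    from B(4)[unfolded good_def, rule_format, OF this] obtain F where
      F: "linear F" "\<forall>x. norm (F x - x) \<le> e / 2 * norm x"
        "\<forall>v\<in>S \<inter> span B. ((v \<in> B \<or> - v \<in> B) \<longrightarrow> norm (F v) = norm v) \<and>
        (\<not> (v \<in> B \<or> - v \<in> B) \<longrightarrow> norm (F v) > norm v)" by blast
    have "onorm (\<lambda>x. F x - x) \<le> e / 2" by (rule onorm_le) (use F(2) in blast)
    then have "onorm (\<lambda>x. F x - x) < e" using e by linarith
    then show "\<exists>F :: real ^ 'n \<Rightarrow> real ^ 'n. linear F \<and> onorm (\<lambda>x. F x - x) < e \<and>
       (\<forall>v\<in>S. ((v \<in> B \<or> - v \<in> B) \<longrightarrow> norm (F v) = norm v) \<and>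
               (\<not> (v \<in> B \<or> - v \<in> B) \<longrightarrow> norm (F v) > norm v))"
      using F B(3) by (intro exI[of _ F]) auto
  qed
qed

end
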